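(* Let $M,N$ be positive integers, $\mathcal{M}=\{1,\dots,M\}$, and let $\omega_N=\{(x_i,\sigma_i)\}_{i=1}^N$ be i.i.d. with respect to the uniform distribution $\mathbb{P}$ over $\mathbb{S}\times\mathcal{M}$. Then, for any $\epsilon\in(0,1)$, with probability no smaller than $1-\mathcal{B}(\epsilon;N)$, $\omega_N$ is an $\epsilon$-covering of $\mathbb{S}\times\mathcal{M}$, where $$\mathcal{B}(\epsilon;N)=\frac{M\left(1-\frac{\delta\left(\frac12\delta^{-1}(\epsilon)\right)}{M}\right)^N}{\delta\left(\frac14\delta^{-1}(\epsilon)\right)}.$$
   Context: $\mathbb{S}$ is the unit sphere in $\mathbb{R}^n$ and $\mu$ the uniform probability measure on $\mathbb{S}$; the uniform distribution on $\mathbb{S}\times\mathcal{M}$ is the product of $\mu$ and the uniform distribution on $\mathcal{M}$. For $x\in\mathbb{S}$, $\theta\in[0,\pi/2]$, $\mathrm{Cap}(x,\theta)=\{v\in\mathbb{S}:|x^\top v|\ge\cos\theta\}$ and $\delta(\theta)=\mu(\mathrm{Cap}(x,\theta))$; $\delta$ is strictly increasing from $[0,\pi/2]$ onto $[0,1]$ with inverse $\delta^{-1}$. Given $\epsilon\in(0,1)$ and $\theta=\delta^{-1}(\epsilon)$, a set $\omega\subset\mathbb{S}\times\mathcal{M}$ is an $\epsilon$-covering of $\mathbb{S}\times\mathcal{M}$ if for every $(x,\sigma)\in\mathbb{S}\times\mathcal{M}$ there exists $z\in\mathbb{S}$ with $(z,\sigma)\in\omega$ and $|z^\top x|\ge\cos\theta$.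 *)

theory Defs
  imports "HOL-Probability.Probability"
begin

text \<open>Uniform probability measure on the unit sphere of a Euclidean space: the normalized
  cone measure, i.e. the image of the uniform distribution on the punctured unit ball
  under radial projection x \<mapsto> x / norm x (this is the normalized surface measure).\<close>
definition sphere_measure :: "'a::euclidean_space measure" where
  "sphere_measure =
     distr (uniform_measure lborel (ball 0 1 - {0}))
           (restrict_space borel (sphere 0 1)) (\<lambda>x. x /\<^sub>R norm x)"

definition Cap :: "'a::euclidean_space \<Rightarrow> real \<Rightarrow> 'a set" where
  "Cap x \<theta> = {v \<in> sphere 0 1. \<bar>x \<bullet> v\<bar> \<ge> cos \<theta>}"

text \<open>delta(theta) = mu(Cap(x,theta)); independent of the unit vector x by rotation
  invariance, so we fix x to be a standard basis vector.\<close>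
definition cap_delta :: "'a::euclidean_space itself \<Rightarrow> real \<Rightarrow> real" where
  "cap_delta _ \<theta> = measure (sphere_measure :: 'a measure) (Cap (SOME b::'a. b \<in> Basis) \<theta>)"

definition cap_delta_inv :: "'a::euclidean_space itself \<Rightarrow> real \<Rightarrow> real" where
  "cap_delta_inv T \<epsilon> = (THE \<theta>. \<theta> \<in> {0..pi/2} \<and> cap_delta T \<theta> = \<epsilon>)"

definition is_covering :: "'a::euclidean_space itself \<Rightarrow> nat \<Rightarrow> real \<Rightarrow> ('a \<times> nat) set \<Rightarrow> bool" where
  "is_covering T M \<epsilon> \<omega> \<longleftrightarrow>
     (\<forall>x \<in> sphere 0 (1::real). \<forall>\<sigma> \<in> {1..M}.
        \<exists>z \<in> sphere 0 1. (z, \<sigma>) \<in> \<omega> \<and> \<bar>z \<bullet> x\<bar> \<ge> cos (cap_delta_inv T \<epsilon>))"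

definition sphere_label_measure :: "nat \<Rightarrow> ('a::euclidean_space \<times> nat) measure" where
  "sphere_label_measure M = sphere_measure \<Otimes>\<^sub>M uniform_count_measure {1..M}"

end

theory Submission
  imports Defs
begin

lemma householder:
  fixes u :: "'a::euclidean_space"
  assumes "u \<noteq> 0"
  defines "H \<equiv> \<lambda>x. x - (2 * (u \<bullet> x) / (u \<bullet> u)) *\<^sub>R u"
  shows "linear H" and "\<And>x. H (H x) = x" and "\<And>x y. H x \<bullet> H y = x \<bullet> y"
    and "\<And>x. norm (H x) = norm x"
proof -
  have uu: "u \<bullet> u \<noteq> 0" using assms by simp
  show "linear H" unfolding H_def
    by (rule linearI) (simp_all add: inner_add_right inner_scaleR_right algebra_simps add_divide_distrib scaleR_add_left)
  show hh: "H (H x) = x" for x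
    using uu unfolding H_def by (simp add: inner_diff_right algebra_simps field_simps)
  show ii: "H x \<bullet> H y = x \<bullet> y" for x y
    using uu unfolding H_def by (simp add: inner_diff_right inner_diff_left algebra_simps field_simps inner_commute)
  show "norm (H x) = norm x" for x
    using ii[of x x] by (simp add: norm_eq_sqrt_inner)
qed

locale invol_isom =
  fixes H :: "'a::euclidean_space \<Rightarrow> 'a"
  assumes lin: "linear H" and inv: "\<And>x. H (H x) = x" and nrm: "\<And>x. norm (H x) = norm x"
begin

lemma cont: "continuous_on UNIV H"
  using lin by (simp add: linear_continuous_on linear_conv_bounded_linear)

lemma meas: "H \<in> borel_measurable borel"
  by (rule borel_measurable_continuous_onI[OF cont])

lemma img_eq_vimage: "H ` X = H -` X"
  using inv by (auto simp: image_def) (metis)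

lemma ball_img: "H ` ball c r = ball (H c) r"
proof -
  have d: "dist (H x) (H c) = dist x c" for x
    by (metis dist_norm lin linear_diff nrm)
  have e: "dist (H c) x = dist c (H x)" for x
    using d[of "H x"] inv by (simp add: dist_commute)
  show ?thesis unfolding img_eq_vimage using e by auto
qed

lemma open_img: "open U \<Longrightarrow> open (H ` U)"
  unfolding img_eq_vimage using cont by (simp add: continuous_on_open_vimage)

lemma injH: "inj H"
  by (metis inv injI)

lemma open_ge:
  assumes U: "open U"
  shows "emeasure lborel U \<le> emeasure lborel (H ` U)"
proof -
  define K where "K = {(c::'a, r::real). 0 < r \<and> ball c r \<subseteq> U}"
  have S: "\<exists>i. i \<in> K \<and> x \<in> ball (fst i) (snd i) \<and> snd i < d" if "x \<in> U" "0 < d" for x d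
  proof -
    have "\<exists>e>0. ball x e \<subseteq> U" using U that open_contains_ball_eq by blast
    then obtain e where e: "e > 0" "ball x e \<subseteq> U" by blast
    have "ball x (min e (d/2)) \<subseteq> ball x e" by (rule subset_ball) simp
    then have "(x, min e (d/2)) \<in> K" using e that unfolding K_def by auto
    moreover have "x \<in> ball x (min e (d/2))" using e that by simp
    moreover have "min e (d/2) < d" using that by simp
    ultimately show ?thesis by (intro exI[of _ "(x, min e (d/2))"]) simp
  qed
  obtain C where C: "countable C" "C \<subseteq> K"
    "pairwise (\<lambda>i j. disjnt (ball (fst i) (snd i)) (ball (fst j) (snd j))) C"
    "negligible (U - (\<Union>i\<in>C. ball (fst i) (snd i)))"
    using Vitali_covering_theorem_balls[where S=U and K=K and a=fst and r=snd, OF S] by blast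
  let ?B = "\<lambda>i. ball (fst i) (snd i)"
  let ?HB = "\<lambda>i. ball (H (fst i)) (snd i)"
  have BU: "?B i \<subseteq> U" if "i \<in> C" for i
  proof -
    have "i \<in> K" using C(2) that by blast
    then show ?thesis unfolding K_def by (cases i) simp
  qed
  have o: "open (\<Union>(?B ` C))" by (intro open_UN ballI open_ball)
  have ob: "\<Union>(?B ` C) \<in> sets lborel" unfolding sets_lborel by (rule borel_open[OF o])
  have null: "U - \<Union>(?B ` C) \<in> null_sets lborel"
  proof -
    have "U - \<Union>(?B ` C) \<in> sets borel" by (intro sets.Diff borel_open U o)
    then show ?thesis using C(4) by (simp add: negligible_iff_null_sets null_sets_completion_iff)
  qed
  have "emeasure lborel U \<le> emeasure lborel (\<Union>(?B ` C) \<union> (U - \<Union>(?B ` C)))"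
    using null ob by (intro emeasure_mono sets.Un) auto
  also have "\<dots> = emeasure lborel (\<Union>(?B ` C))"
    by (rule emeasure_Un_null_set[OF ob null])
  also have "\<dots> = (\<integral>\<^sup>+i. emeasure lborel (?B i) \<partial>count_space C)"
  proof (rule emeasure_UN_countable)
    show "disjoint_family_on ?B C"
      using C(3) unfolding disjoint_family_on_def pairwise_def disjnt_def by blast
  qed (use C in auto)
  also have "\<dots> = (\<integral>\<^sup>+i. emeasure lborel (?HB i) \<partial>count_space C)"
  proof (rule nn_integral_cong)
    fix i assume "i \<in> space (count_space C)"
    then have "i \<in> K" using C(2) by auto
    then have "snd i \<ge> 0" unfolding K_def by (cases i) auto
    then show "emeasure lborel (?B i) = emeasure lborel (?HB i)" by (simp add: emeasure_ball)
  qed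
  also have "\<dots> = emeasure lborel (\<Union>(?HB ` C))"
  proof (rule emeasure_UN_countable[symmetric])
    show "disjoint_family_on ?HB C"
      unfolding disjoint_family_on_def
    proof (intro ballI impI)
      fix i j assume ij: "i \<in> C" "j \<in> C" "i \<noteq> j"
      have "?B i \<inter> ?B j = {}" using C(3) ij by (auto simp: pairwise_def disjnt_def)
      then have "H ` (?B i \<inter> ?B j) = {}" by simp
      moreover have "H ` (?B i \<inter> ?B j) = ?HB i \<inter> ?HB j"
        by (simp only: image_Int[OF injH] ball_img)
      ultimately show "?HB i \<inter> ?HB j = {}" by simp
    qed
  qed (use C in auto)
  also have "\<dots> \<le> emeasure lborel (H ` U)"
  proof (rule emeasure_mono)
    show "\<Union>(?HB ` C) \<subseteq> H ` U"
      unfolding ball_img[symmetric] by (intro UN_least image_mono BU)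
    show "H ` U \<in> sets lborel" using open_img[OF U] by auto
  qed
  finally show ?thesis .
qed

lemma open_eq:
  assumes U: "open U"
  shows "emeasure lborel (H ` U) = emeasure lborel U"
proof (rule antisym)
  have "emeasure lborel (H ` U) \<le> emeasure lborel (H ` H ` U)"
    by (rule open_ge[OF open_img[OF U]])
  also have "H ` H ` U = U" using inv by (force simp: image_image)
  finally show "emeasure lborel (H ` U) \<le> emeasure lborel U" .
qed (rule open_ge[OF U])

lemma distr_eq: "distr lborel borel H = lborel"
proof (rule measure_eqI_generator_eq[where E="{S. open S}" and \<Omega>=UNIV and A="\<lambda>i. ball 0 (real i)"])
  show "Int_stable {S. open S}" by (auto simp: Int_stable_def)
  fix X assume "X \<in> {S::'a set. open S}"
  then show "emeasure (distr lborel borel H) X = emeasure lborel X"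
    using meas by (simp add: emeasure_distr open_eq img_eq_vimage[symmetric])
next
  show "\<And>i. emeasure (distr lborel borel H) (ball 0 (real i)) \<noteq> \<infinity>"
    using meas by (simp add: emeasure_distr img_eq_vimage[symmetric] open_eq emeasure_ball)
next
  show "(\<Union>i. ball (0::'a) (real i)) = UNIV"
  proof -
    have "x \<in> (\<Union>i. ball (0::'a) (real i))" for x
      using reals_Archimedean2[of "norm x"] by auto
    then show ?thesis by blast
  qed
next
  show "{S::'a set. open S} \<subseteq> Pow UNIV" by simp
  show "sets (distr lborel borel H) = sigma_sets UNIV {S. open S}" by (simp add: sets_borel)
  show "sets lborel = sigma_sets UNIV {S::'a set. open S}" by (simp add: sets_borel)
  show "range (\<lambda>i. ball (0::'a) (real i)) \<subseteq> {S. open S}" by auto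
qed

lemma measure_img:
  assumes "X \<in> sets borel"
  shows "measure lborel (H ` X) = measure lborel X"
proof -
  have "measure lborel (H ` X) = measure (distr lborel borel H) X"
    using assms meas by (simp add: measure_distr img_eq_vimage)
  then show ?thesis by (simp add: distr_eq)
qed

end

definition e0 :: "'a::euclidean_space" where "e0 = (SOME b. b \<in> Basis)"

lemma e0_basis: "e0 \<in> Basis"
  unfolding e0_def by (rule someI_ex) (use nonempty_Basis in blast)

lemma e0_norm[simp]: "norm e0 = 1"
  using norm_Basis[OF e0_basis] .

definition radg :: "'a::euclidean_space \<Rightarrow> 'a" where
  "radg x = (if x = 0 then e0 else x /\<^sub>R norm x)"

abbreviation B0 :: "'a::euclidean_space set" where "B0 \<equiv> ball 0 1 - {0}"

lemma radg_sphere: "radg x \<in> sphere 0 1"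
  by (simp add: radg_def)

lemma radg_meas: "radg \<in> borel \<rightarrow>\<^sub>M restrict_space borel (sphere (0::'a::euclidean_space) 1)"
proof (rule measurable_restrict_space2)
  show "radg \<in> space borel \<rightarrow> sphere 0 1" using radg_sphere by auto
  show "radg \<in> borel \<rightarrow>\<^sub>M borel" unfolding radg_def by measurable
qed

lemma B0_sets[measurable]: "B0 \<in> sets (borel :: 'a::euclidean_space measure)"
  by measurable

lemma emeasure_B0: "emeasure lborel (B0::'a::euclidean_space set) = emeasure lborel (ball (0::'a) 1)"
  by (rule emeasure_Diff_null_set) (auto simp: null_sets_def)

lemma emeasure_B0_pos: "0 < emeasure lborel (B0::'a::euclidean_space set)"
  "emeasure lborel (B0::'a::euclidean_space set) < \<infinity>"
  unfolding emeasure_B0 by (simp_all add: emeasure_ball emeasure_lborel_ball_finite)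

lemma emeasure_B0_ne: "emeasure lborel (B0::'a::euclidean_space set) \<noteq> 0"
  "emeasure lborel (B0::'a::euclidean_space set) \<noteq> \<infinity>"
  using emeasure_B0_pos[where 'a='a] by auto

lemma sphere_measure_alt:
  "(sphere_measure :: 'a::euclidean_space measure) =
     distr (uniform_measure lborel B0) (restrict_space borel (sphere 0 1)) radg"
  unfolding sphere_measure_def distr_def
proof (rule measure_of_eq)
  let ?N = "restrict_space borel (sphere (0::'a) 1)"
  show "sets ?N \<subseteq> Pow (space ?N)" by (rule sets.space_closed)
  fix a assume "a \<in> sigma_sets (space ?N) (sets ?N)"
  moreover have "sigma_sets (space ?N) (sets ?N) = sets ?N" by (rule sets.sigma_sets_eq)
  ultimately have a: "a \<in> sets ?N" by simp
  then have asub: "a \<subseteq> sphere 0 1" using sets.sets_into_space by fastforce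
  have g: "radg -` a \<in> sets borel"
    using measurable_sets[OF radg_meas a] by simp
  have fg: "(\<lambda>x. x /\<^sub>R norm x) -` a = radg -` a - {0}"
    using asub by (auto simp: radg_def)
  have f: "(\<lambda>x. x /\<^sub>R norm x) -` a \<in> sets borel"
    unfolding fg using g by auto
  have i: "B0 \<inter> (\<lambda>x. x /\<^sub>R norm x) -` a = B0 \<inter> radg -` a"
    unfolding fg by auto
  show "emeasure (uniform_measure lborel B0) ((\<lambda>x. x /\<^sub>R norm x) -` a \<inter> space (uniform_measure lborel B0)) =
        emeasure (uniform_measure lborel B0) (radg -` a \<inter> space (uniform_measure lborel B0))"
    using f g i by simp
qed

lemma sphere_measure_space[simp]: "space (sphere_measure :: 'a::euclidean_space measure) = sphere 0 1"
  by (simp add: sphere_measure_def)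

lemma sphere_measure_sets: "sets (sphere_measure :: 'a::euclidean_space measure) = sets (restrict_space borel (sphere 0 1))"
  by (simp add: sphere_measure_def)

lemma prob_space_sphere_measure: "prob_space (sphere_measure :: 'a::euclidean_space measure)"
  unfolding sphere_measure_alt
proof (rule prob_space.prob_space_distr)
  show "prob_space (uniform_measure lborel (B0::'a set))"
    using emeasure_B0_ne by (intro prob_space_uniform_measure) auto
  show "radg \<in> uniform_measure lborel B0 \<rightarrow>\<^sub>M restrict_space borel (sphere (0::'a) 1)"
    using radg_meas by (simp cong: measurable_cong_sets)
qed

definition pre :: "'a::euclidean_space set \<Rightarrow> 'a set" where
  "pre A = {x \<in> B0. x /\<^sub>R norm x \<in> A}"

definition vol :: "'a::euclidean_space itself \<Rightarrow> real" where
  "vol _ = measure lborel (B0::'a set)"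

lemma vol_pos: "vol TYPE('a::euclidean_space) > 0"
  using emeasure_B0_pos[where 'a='a] unfolding vol_def
  by (simp add: measure_def enn2real_positive_iff)

lemma pre_sets: "A \<in> sets (sphere_measure :: 'a::euclidean_space measure) \<Longrightarrow> pre A \<in> sets borel"
proof -
  assume "A \<in> sets (sphere_measure :: 'a measure)"
  then have "radg -` A \<in> sets borel"
    using measurable_sets[OF radg_meas, of A] by (simp add: sphere_measure_sets)
  moreover have "pre A = B0 \<inter> radg -` A" by (auto simp: pre_def radg_def)
  ultimately show ?thesis by auto
qed

lemma measure_sphere:
  assumes A: "A \<in> sets (sphere_measure :: 'a::euclidean_space measure)"
  shows "measure sphere_measure A = measure lborel (pre A) / vol TYPE('a)"
proof -
  have eqp: "pre A = B0 \<inter> radg -` A" by (auto simp: pre_def radg_def)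
  have As: "A \<in> sets (restrict_space borel (sphere (0::'a) 1))" using A by (simp add: sphere_measure_sets)
  have m: "radg \<in> uniform_measure lborel (B0::'a set) \<rightarrow>\<^sub>M restrict_space borel (sphere (0::'a) 1)"
    using radg_meas by (simp cong: measurable_cong_sets)
  have "measure sphere_measure A = measure (uniform_measure lborel B0) (radg -` A \<inter> space (uniform_measure lborel B0))"
    unfolding sphere_measure_alt by (rule measure_distr[OF m As])
  also have "\<dots> = measure lborel (B0 \<inter> radg -` A) / measure lborel (B0::'a set)"
  proof -
    have "radg -` A \<in> sets borel" using measurable_sets[OF radg_meas As] by simp
    then have "radg -` A \<inter> space (uniform_measure lborel B0) \<in> sets lborel" by simp
    from measure_uniform_measure[OF emeasure_B0_ne this]
    show ?thesis by simp
  qed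
  finally show ?thesis by (simp add: eqp vol_def)
qed

lemma sets_sphereI:
  assumes "A \<in> sets borel" "A \<subseteq> sphere 0 1"
  shows "A \<in> sets (sphere_measure :: 'a::euclidean_space measure)"
  unfolding sphere_measure_sets using assms
  by (subst sets_restrict_space_iff) auto

lemma Cap_sets: "Cap (y::'a::euclidean_space) t \<in> sets sphere_measure"
proof (rule sets_sphereI)
  have "closed (sphere (0::'a) 1 \<inter> {v. cos t \<le> \<bar>y \<bullet> v\<bar>})"
    by (intro closed_Int closed_sphere closed_Collect_le continuous_intros)
  moreover have "Cap y t = sphere (0::'a) 1 \<inter> {v. cos t \<le> \<bar>y \<bullet> v\<bar>}"
    by (auto simp: Cap_def)
  ultimately show "Cap y t \<in> sets borel" by (simp add: borel_closed)
qed (auto simp: Cap_def)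

lemma pre_Cap: "pre (Cap (y::'a::euclidean_space) t) = {x \<in> B0. cos t * norm x \<le> \<bar>y \<bullet> x\<bar>}"
proof -
  have "(x /\<^sub>R norm x \<in> Cap y t) = (cos t * norm x \<le> \<bar>y \<bullet> x\<bar>)" if "x \<noteq> 0" for x
  proof -
    have n: "norm x > 0" using that by simp
    have "\<bar>y \<bullet> (x /\<^sub>R norm x)\<bar> = \<bar>y \<bullet> x\<bar> / norm x" using n by (simp add: abs_mult field_simps)
    then show ?thesis using n that by (simp add: Cap_def norm_sgn[unfolded sgn_div_norm] pos_le_divide_eq mult.commute)
  qed
  then show ?thesis unfolding pre_def by auto
qed

lemma cap_rot:
  fixes y :: "'a::euclidean_space"
  assumes y: "norm y = 1"
  shows "measure sphere_measure (Cap y t) = measure sphere_measure (Cap (e0::'a) t)"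
proof (cases "y = e0")
  case True then show ?thesis by simp
next
  case False
  define u where "u = e0 - y"
  have u: "u \<noteq> 0" using False by (simp add: u_def)
  define H where "H = (\<lambda>x. x - (2 * (u \<bullet> x) / (u \<bullet> u)) *\<^sub>R u)"
  have hh: "linear H" "\<And>x. H (H x) = x" "\<And>x y. H x \<bullet> H y = x \<bullet> y" "\<And>x. norm (H x) = norm x"
    unfolding H_def using householder[OF u] by simp_all
  interpret invol_isom H by (rule invol_isom.intro) (simp_all add: hh)
  have He0: "H e0 = y"
  proof -
    have ue: "u \<bullet> e0 = 1 - y \<bullet> e0" using e0_norm by (simp add: u_def inner_diff_left dot_square_norm)
    have uu: "u \<bullet> u = 2 - 2 * (y \<bullet> e0)"
    proof -
      have "u \<bullet> u = (e0::'a) \<bullet> e0 - 2 * (y \<bullet> e0) + y \<bullet> y"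
        by (simp add: u_def inner_diff_left inner_diff_right inner_commute)
      also have "(e0::'a) \<bullet> e0 = (1::real)" using e0_norm[where 'a='a] by (simp add: dot_square_norm)
      also have "y \<bullet> y = 1" using y by (simp add: dot_square_norm)
      finally show ?thesis by simp
    qed
    have "y \<bullet> e0 \<noteq> 1"
    proof
      assume "y \<bullet> e0 = 1"
      then have "u \<bullet> u = 0" using uu by simp
      then show False using u by simp
    qed
    then have "2 * (u \<bullet> e0) / (u \<bullet> u) = 1" using ue uu u by (simp add: field_simps)
    then have "H e0 = e0 - 1 *\<^sub>R u" unfolding H_def by (simp only:)
    then show ?thesis by (simp add: u_def)
  qed
  have Hy: "H y = e0" using He0 inv by metis
  have "pre (Cap y t) = H -` pre (Cap e0 t)"
  proof -
    have e: "e0 \<bullet> H x = y \<bullet> x" for x using hh(3)[of y x] Hy by simp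
    have z: "H x = 0 \<longleftrightarrow> x = 0" for x using nrm[of x] by (metis norm_eq_zero)
    have b: "H x \<in> B0 \<longleftrightarrow> x \<in> B0" for x
      using nrm[of x] z[of x] by simp
    show ?thesis unfolding pre_Cap
    proof (intro set_eqI iffI)
      fix x assume "x \<in> {x \<in> B0. cos t * norm x \<le> \<bar>y \<bullet> x\<bar>}"
      then show "x \<in> H -` {x \<in> B0. cos t * norm x \<le> \<bar>e0 \<bullet> x\<bar>}"
        using b[of x] e[of x] nrm[of x] by simp
    next
      fix x assume "x \<in> H -` {x \<in> B0. cos t * norm x \<le> \<bar>e0 \<bullet> x\<bar>}"
      then show "x \<in> {x \<in> B0. cos t * norm x \<le> \<bar>y \<bullet> x\<bar>}"
        using b[of x] e[of x] nrm[of x] by simp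
    qed
  qed
  then have "pre (Cap y t) = H ` pre (Cap e0 t)" by (simp add: img_eq_vimage)
  then have "measure lborel (pre (Cap y t)) = measure lborel (pre (Cap (e0::'a) t))"
    using measure_img[OF pre_sets[OF Cap_sets[of "e0::'a" t]]] by simp
  then show ?thesis by (simp add: measure_sphere[OF Cap_sets])
qed

lemma cap_delta_e0: "cap_delta TYPE('a::euclidean_space) t = measure sphere_measure (Cap (e0::'a) t)"
  by (simp add: cap_delta_def e0_def)

lemma cap_delta_any:
  fixes y :: "'a::euclidean_space"
  assumes "norm y = 1"
  shows "measure sphere_measure (Cap y t) = cap_delta TYPE('a) t"
  using cap_rot[OF assms] cap_delta_e0[where 'a='a] by simp

lemma e0_inner[simp]: "(e0::'a::euclidean_space) \<bullet> e0 = 1"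
  using e0_basis[where 'a='a] by (simp add: inner_Basis)

lemma norm_perp: "norm (x - ((e0::'a::euclidean_space) \<bullet> x) *\<^sub>R e0) ^ 2 = norm x ^ 2 - (e0 \<bullet> x)^2"
  unfolding power2_norm_eq_inner
  by (simp add: inner_diff_left inner_diff_right inner_commute algebra_simps power2_eq_square)

lemma negligible_cone:
  fixes c :: real
  assumes dim: "DIM('a::euclidean_space) \<ge> 2"
  shows "negligible ({x::'a. \<bar>e0 \<bullet> x\<bar> = c * norm x} - {0})"
proof -
  consider "c < 0 \<or> c > 1" | "c = 1" | "0 \<le> c" "c < 1" by linarith
  then show ?thesis
  proof cases
    case 1
    have "{x::'a. \<bar>e0 \<bullet> x\<bar> = c * norm x} - {0} = {}"
    proof (safe)
      fix x :: 'a assume x: "\<bar>e0 \<bullet> x\<bar> = c * norm x" "x \<notin> {}"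
      show "x = 0"
      proof (rule ccontr)
        assume "x \<noteq> 0"
        then have n: "norm x > 0" by simp
        have "\<bar>e0 \<bullet> x\<bar> \<le> norm (e0::'a) * norm x" by (rule Cauchy_Schwarz_ineq2)
        then have le: "\<bar>e0 \<bullet> x\<bar> \<le> norm x" by simp
        have "c * norm x < 0 \<or> norm x < c * norm x"
          using 1 n by (auto simp: mult_neg_pos)
        then show False using le x(1) by linarith
      qed
    qed
    then show ?thesis by simp
  next
    case 2
    obtain e1 :: 'a where e1: "e1 \<in> Basis" "e1 \<noteq> e0"
    proof -
      have "Basis - {e0::'a} \<noteq> {}"
      proof
        assume "Basis - {e0::'a} = {}"
        then have "Basis \<subseteq> {e0::'a}" by blast
        then have "card (Basis::'a set) \<le> card {e0::'a}" by (intro card_mono) auto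
        then have "card (Basis::'a set) \<le> 1" by simp
        then show False using dim by simp
      qed
      then show ?thesis using that by blast
    qed
    have "{x::'a. \<bar>e0 \<bullet> x\<bar> = c * norm x} - {0} \<subseteq> {x. e1 \<bullet> x = 0}"
    proof safe
      fix x :: 'a assume x: "\<bar>e0 \<bullet> x\<bar> = c * norm x"
      have "norm (x - (e0 \<bullet> x) *\<^sub>R e0) ^ 2 = norm x ^ 2 - (e0 \<bullet> x)^2"
        by (rule norm_perp)
      also have "\<dots> = 0"
      proof -
        have a: "\<bar>e0 \<bullet> x\<bar> = norm x" using x 2 by simp
        have "(e0 \<bullet> x)^2 = \<bar>e0 \<bullet> x\<bar>^2" by simp
        also have "\<dots> = norm x ^ 2" using a by simp
        finally show ?thesis by simp
      qed
      finally have "x = (e0 \<bullet> x) *\<^sub>R e0" by simp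
      then have "e1 \<bullet> x = (e0 \<bullet> x) * (e1 \<bullet> e0)" by (metis inner_scaleR_right)
      also have "e1 \<bullet> e0 = 0" using e1 e0_basis[where 'a='a] by (simp add: inner_not_same_Basis)
      finally show "e1 \<bullet> x = 0" by simp
    qed
    moreover have "negligible {x::'a. e1 \<bullet> x = 0}"
      using e1 by (intro negligible_hyperplane) auto
    ultimately show ?thesis using negligible_subset by blast
  next
    case 3
    define k where "k = c / sqrt (1 - c^2)"
    have "c^2 \<le> c" using 3 by (simp add: power2_eq_square mult_left_le_one_le)
    then have c2: "1 - c^2 > 0" using 3 by linarith
    then have sq: "sqrt (1 - c^2) > 0" by simp
    define fp where "fp = (\<lambda>w::'a. w + (k * norm w) *\<^sub>R e0)"
    define fm where "fm = (\<lambda>w::'a. w - (k * norm w) *\<^sub>R e0)"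
    define Hy where "Hy = {w::'a. e0 \<bullet> w = 0}"
    have negH: "negligible Hy" unfolding Hy_def
      using e0_basis[where 'a='a] by (intro negligible_hyperplane) (auto simp: nonzero_Basis)
    have lip: "norm (f y - f x) \<le> (1 + \<bar>k\<bar>) * norm (y - x)"
      if "f = fp \<or> f = fm" for f and x y :: 'a
    proof -
      have "norm (f y - f x) \<le> norm (y - x) + \<bar>k\<bar> * \<bar>norm y - norm x\<bar>"
      proof -
        have "f y - f x = (y - x) + (k * (norm y - norm x)) *\<^sub>R e0 \<or> f y - f x = (y - x) - (k * (norm y - norm x)) *\<^sub>R e0"
          using that by (auto simp: fp_def fm_def algebra_simps)
        then show ?thesis
          using norm_triangle_ineq[of "y - x" "(k * (norm y - norm x)) *\<^sub>R e0"]
                norm_triangle_ineq4[of "y - x" "(k * (norm y - norm x)) *\<^sub>R e0"]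
          by (auto simp: abs_mult)
      qed
      also have "\<bar>norm y - norm x\<bar> \<le> norm (y - x)" by (rule norm_triangle_ineq3)
      then have "norm (y - x) + \<bar>k\<bar> * \<bar>norm y - norm x\<bar> \<le> (1 + \<bar>k\<bar>) * norm (y - x)"
        by (simp add: algebra_simps mult_left_mono)
      finally show ?thesis .
    qed
    have negf: "negligible (f ` Hy)" if "f = fp \<or> f = fm" for f
      by (rule negligible_locally_Lipschitz_image[OF order_refl negH])
         (use lip[OF that] in \<open>auto intro!: exI[of _ UNIV] exI[of _ "1 + \<bar>k\<bar>"]\<close>)
    have "{x::'a. \<bar>e0 \<bullet> x\<bar> = c * norm x} - {0} \<subseteq> fp ` Hy \<union> fm ` Hy"
    proof safe
      fix x :: 'a assume x: "\<bar>e0 \<bullet> x\<bar> = c * norm x" and nm: "x \<notin> fm ` Hy"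
      define w where "w = x - (e0 \<bullet> x) *\<^sub>R e0"
      have wH: "w \<in> Hy" using e0_norm[where 'a='a]
        by (simp add: Hy_def w_def inner_diff_right dot_square_norm)
      have nx: "norm x ^ 2 = (e0 \<bullet> x)^2 + norm w ^ 2"
        using norm_perp[of x] by (simp add: w_def)
      have "(e0 \<bullet> x)^2 = c^2 * norm x ^ 2" using x by (metis power2_abs power_mult_distrib)
      then have "(e0 \<bullet> x)^2 * (1 - c^2) = c^2 * norm w ^ 2" using nx by (simp add: algebra_simps)
      then have eq: "(e0 \<bullet> x)^2 = c^2 * norm w ^ 2 / (1 - c^2)" using c2
        by (simp add: eq_divide_eq)
      have "(k * norm w)^2 = c^2 * norm w ^ 2 / (1 - c^2)" using c2
        by (simp add: k_def power_mult_distrib power_divide)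
      then have "(e0 \<bullet> x)^2 = (k * norm w)^2" using eq by simp
      then have "e0 \<bullet> x = k * norm w \<or> e0 \<bullet> x = - (k * norm w)" by (simp add: power2_eq_iff)
      moreover have xw: "x = w + (e0 \<bullet> x) *\<^sub>R e0" by (simp add: w_def)
      ultimately have "x = fp w \<or> x = fm w" by (auto simp: fp_def fm_def)
      then show "x \<in> fp ` Hy" using nm wH by blast
    qed
    then show ?thesis using negf[of fp] negf[of fm] negligible_Un negligible_subset by blast
  qed
qed

lemma exists_e1:
  fixes dummy :: "'a::euclidean_space"
  assumes dim: "DIM('a) \<ge> 2"
  obtains e1 :: 'a where "e1 \<in> Basis" "e1 \<noteq> e0"
proof -
  have "Basis - {e0::'a} \<noteq> {}"
  proof
    assume "Basis - {e0::'a} = {}"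
    then have "Basis \<subseteq> {e0::'a}" by blast
    then have "card (Basis::'a set) \<le> card {e0::'a}" by (intro card_mono) auto
    then have "card (Basis::'a set) \<le> 1" by simp
    then show False using dim by simp
  qed
  then show ?thesis using that by blast
qed

lemma pre_fun: "pre {v \<in> sphere 0 1. P \<bar>(e0::'a::euclidean_space) \<bullet> v\<bar>} = {x \<in> B0. P (\<bar>e0 \<bullet> x\<bar> / norm x)}"
proof -
  have "\<bar>e0 \<bullet> (x /\<^sub>R norm x)\<bar> = \<bar>e0 \<bullet> x\<bar> / norm x" if "x \<noteq> (0::'a)" for x
    using that by (simp add: abs_mult field_simps)
  then show ?thesis unfolding pre_def by auto
qed

lemma sets_sphere_fun:
  assumes "closed {r::real. P r} \<or> open {r::real. P r}"
  shows "{v \<in> sphere 0 1. P \<bar>(e0::'a::euclidean_space) \<bullet> v\<bar>} \<in> sets sphere_measure"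
proof (rule sets_sphereI)
  have c: "continuous_on UNIV (\<lambda>v::'a. \<bar>e0 \<bullet> v\<bar>)" by (intro continuous_intros)
  have "(\<lambda>v::'a. \<bar>e0 \<bullet> v\<bar>) -` {r. P r} \<in> sets borel"
    using assms
  proof
    assume "closed {r. P r}"
    then have "closed ((\<lambda>v::'a. \<bar>e0 \<bullet> v\<bar>) -` {r. P r})"
      by (rule continuous_closed_vimage) (intro continuous_intros)
    then show ?thesis by (simp add: borel_closed)
  next
    assume "open {r. P r}"
    then have "open ((\<lambda>v::'a. \<bar>e0 \<bullet> v\<bar>) -` {r. P r})"
      by (rule continuous_open_vimage) (intro continuous_intros)
    then show ?thesis by (simp add: borel_open)
  qed
  moreover have "{v \<in> sphere 0 1. P \<bar>(e0::'a) \<bullet> v\<bar>} = sphere 0 1 \<inter> (\<lambda>v::'a. \<bar>e0 \<bullet> v\<bar>) -` {r. P r}"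
    by auto
  ultimately show "{v \<in> sphere 0 1. P \<bar>(e0::'a) \<bullet> v\<bar>} \<in> sets borel" by auto
qed auto

lemma level_null:
  assumes dim: "DIM('a::euclidean_space) \<ge> 2"
  shows "measure sphere_measure {v \<in> sphere 0 1. \<bar>(e0::'a) \<bullet> v\<bar> = c} = 0"
proof -
  let ?L = "{v \<in> sphere 0 1. \<bar>(e0::'a) \<bullet> v\<bar> = c}"
  have Ls: "?L \<in> sets sphere_measure" by (rule sets_sphere_fun) auto
  have "pre ?L = {x \<in> B0. \<bar>e0 \<bullet> x\<bar> / norm x = c}" by (rule pre_fun)
  also have "\<dots> \<subseteq> {x::'a. \<bar>e0 \<bullet> x\<bar> = c * norm x} - {0}"
    by (auto simp: field_simps)
  finally have "negligible (pre ?L)" using negligible_cone[OF dim, of c] negligible_subset by blast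
  moreover have "pre ?L \<in> sets borel" by (rule pre_sets[OF Ls])
  ultimately have "pre ?L \<in> null_sets lborel"
    by (simp add: negligible_iff_null_sets null_sets_completion_iff)
  then have "measure lborel (pre ?L) = 0" by (simp add: measure_def null_setsD1)
  then show ?thesis using measure_sphere[OF Ls] by simp
qed

lemma absmeas: "(\<lambda>v. \<bar>(e0::'a::euclidean_space) \<bullet> v\<bar>) \<in> borel_measurable sphere_measure"
proof -
  have c: "continuous_on UNIV (\<lambda>v::'a. \<bar>e0 \<bullet> v\<bar>)" by (intro continuous_intros)
  have "(\<lambda>v::'a. \<bar>e0 \<bullet> v\<bar>) \<in> borel_measurable (restrict_space borel (sphere 0 1))"
    by (intro measurable_restrict_space1 borel_measurable_continuous_onI c)
  then show ?thesis using sphere_measure_sets[where 'a='a] by (simp cong: measurable_cong_sets)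
qed

lemma delta_cdf:
  assumes dim: "DIM('a::euclidean_space) \<ge> 2"
  shows "cap_delta TYPE('a) t = 1 - cdf (distr sphere_measure borel (\<lambda>v. \<bar>(e0::'a) \<bullet> v\<bar>)) (cos t)"
proof -
  interpret P: prob_space "sphere_measure :: 'a measure" by (rule prob_space_sphere_measure)
  let ?lt = "{v \<in> sphere 0 1. \<bar>(e0::'a) \<bullet> v\<bar> < cos t}"
  let ?eq = "{v \<in> sphere 0 1. \<bar>(e0::'a) \<bullet> v\<bar> = cos t}"
  let ?le = "{v \<in> sphere 0 1. \<bar>(e0::'a) \<bullet> v\<bar> \<le> cos t}"
  have lts: "?lt \<in> sets sphere_measure" by (rule sets_sphere_fun) (auto intro: open_Collect_less continuous_intros)
  have eqs: "?eq \<in> sets sphere_measure" by (rule sets_sphere_fun) auto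
  have "cdf (distr sphere_measure borel (\<lambda>v. \<bar>(e0::'a) \<bullet> v\<bar>)) (cos t) =
        measure sphere_measure ((\<lambda>v. \<bar>(e0::'a) \<bullet> v\<bar>) -` {..cos t} \<inter> space sphere_measure)"
    unfolding cdf_def by (rule measure_distr[OF absmeas]) simp
  also have "(\<lambda>v. \<bar>(e0::'a) \<bullet> v\<bar>) -` {..cos t} \<inter> space sphere_measure = ?lt \<union> ?eq"
    by auto
  also have "measure sphere_measure (?lt \<union> ?eq) = measure sphere_measure ?lt + measure sphere_measure ?eq"
    by (rule P.finite_measure_Union[OF lts eqs]) auto
  also have "measure sphere_measure ?eq = 0" by (rule level_null[OF dim])
  finally have cdfe: "cdf (distr sphere_measure borel (\<lambda>v. \<bar>(e0::'a) \<bullet> v\<bar>)) (cos t) = measure sphere_measure ?lt"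
    by simp
  have "Cap (e0::'a) t = space sphere_measure - ?lt" by (auto simp: Cap_def)
  then have "cap_delta TYPE('a) t = measure sphere_measure (space sphere_measure - ?lt)"
    by (simp add: cap_delta_e0)
  also have "\<dots> = 1 - measure sphere_measure ?lt" by (rule P.prob_compl[OF lts])
  finally show ?thesis using cdfe by simp
qed

lemma delta_cont:
  assumes dim: "DIM('a::euclidean_space) \<ge> 2"
  shows "continuous_on S (cap_delta TYPE('a))"
proof -
  interpret P: prob_space "sphere_measure :: 'a measure" by (rule prob_space_sphere_measure)
  let ?D = "distr sphere_measure borel (\<lambda>v. \<bar>(e0::'a) \<bullet> v\<bar>)"
  interpret D: real_distribution ?D by (rule P.real_distribution_distr) (rule absmeas)
  have ic: "isCont (cdf ?D) x" for x
  proof -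
    have "measure ?D {x} = measure sphere_measure ((\<lambda>v. \<bar>(e0::'a) \<bullet> v\<bar>) -` {x} \<inter> space sphere_measure)"
      by (rule measure_distr[OF absmeas]) simp
    also have "(\<lambda>v. \<bar>(e0::'a) \<bullet> v\<bar>) -` {x} \<inter> space sphere_measure = {v \<in> sphere 0 1. \<bar>(e0::'a) \<bullet> v\<bar> = x}"
      by auto
    also have "measure sphere_measure \<dots> = 0" by (rule level_null[OF dim])
    finally show ?thesis by (simp add: D.isCont_cdf)
  qed
  have "continuous_on S (\<lambda>t. 1 - cdf ?D (cos t))"
    by (intro continuous_at_imp_continuous_on ballI continuous_intros isCont_o2[OF _ ic]) 
  then show ?thesis using delta_cdf[OF dim] by simp
qed

lemma Cap_mono: "0 \<le> s \<Longrightarrow> s \<le> t \<Longrightarrow> t \<le> pi \<Longrightarrow> Cap y s \<subseteq> Cap y t"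
  using cos_monotone_0_pi_le[of s t] by (auto simp: Cap_def)

lemma inner_unit_le: "norm (x::'a::euclidean_space) = 1 \<Longrightarrow> norm (y::'a) = 1 \<Longrightarrow> \<bar>x \<bullet> y\<bar> \<le> 1"
  using Cauchy_Schwarz_ineq2[of x y] by simp

lemma delta0:
  assumes dim: "DIM('a::euclidean_space) \<ge> 2"
  shows "cap_delta TYPE('a) 0 = 0"
proof -
  have "Cap (e0::'a) 0 = {v \<in> sphere 0 1. \<bar>(e0::'a) \<bullet> v\<bar> = 1}"
    using inner_unit_le[of "e0::'a"] by (force simp: Cap_def)
  then show ?thesis using level_null[OF dim, of 1] by (simp add: cap_delta_e0)
qed

lemma delta_pi2: "cap_delta TYPE('a::euclidean_space) (pi/2) = 1"
proof -
  interpret P: prob_space "sphere_measure :: 'a measure" by (rule prob_space_sphere_measure)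
  have "Cap (e0::'a) (pi/2) = space sphere_measure" by (auto simp: Cap_def)
  then show ?thesis using P.prob_space by (simp add: cap_delta_e0)
qed

lemma delta_strict:
  assumes dim: "DIM('a::euclidean_space) \<ge> 2" and st: "0 \<le> s" "s < t" "t \<le> pi/2"
  shows "cap_delta TYPE('a) s < cap_delta TYPE('a) t"
proof -
  interpret P: prob_space "sphere_measure :: 'a measure" by (rule prob_space_sphere_measure)
  obtain e1 :: 'a where e1: "e1 \<in> Basis" "e1 \<noteq> e0" using exists_e1[OF dim] by blast
  have e01: "(e0::'a) \<bullet> e1 = 0" using e1 e0_basis[where 'a='a] by (simp add: inner_not_same_Basis)
  have e11: "e1 \<bullet> e1 = 1" using e1 by (simp add: inner_Basis)
  have ct: "cos t < cos s" using st by (intro cos_monotone_0_pi) auto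
  have ct0: "0 \<le> cos t" using st by (intro cos_ge_zero) auto
  have cs1: "cos s \<le> 1" by simp
  define m where "m = (cos s + cos t) / 2"
  have m: "cos t < m" "m < cos s" "0 \<le> m" "m < 1"
  proof -
    show "cos t < m" "m < cos s" "0 \<le> m" unfolding m_def using ct ct0 by simp_all
    have "cos s + cos t < 2" using ct cs1 by linarith
    then show "m < 1" unfolding m_def by simp
  qed
  have "m * m \<le> m" using m by (intro mult_left_le_one_le) auto
  then have m2: "m^2 < 1" using m by (simp add: power2_eq_square)
  define x0 where "x0 = (1/2) *\<^sub>R (m *\<^sub>R e0 + sqrt (1 - m^2) *\<^sub>R e1)"
  have ex0: "e0 \<bullet> x0 = m / 2" by (simp add: x0_def inner_add_right e01)
  have "x0 \<bullet> x0 = 1/4 * (m^2 + (sqrt (1 - m^2))^2)"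
    by (simp add: x0_def inner_add_right inner_add_left e01 e11 inner_commute power2_eq_square algebra_simps)
  also have "\<dots> = 1/4" using m2 by simp
  finally have "norm x0 = sqrt (1/4)" by (simp add: norm_eq_sqrt_inner)
  also have "sqrt (1/4) = (1/2::real)" by (rule real_sqrt_unique) (simp_all add: power2_eq_square)
  finally have nx0: "norm x0 = 1/2" .
  define Op where "Op = {x::'a. norm x < 1 \<and> cos t * norm x < \<bar>e0 \<bullet> x\<bar> \<and> \<bar>e0 \<bullet> x\<bar> < cos s * norm x}"
  have Oo: "open Op" unfolding Op_def
    by (intro open_Collect_conj open_Collect_less continuous_intros)
  have x0O: "x0 \<in> Op" using m by (simp add: Op_def nx0 ex0)
  let ?R = "{v \<in> sphere 0 1. cos t < \<bar>(e0::'a) \<bullet> v\<bar> \<and> \<bar>e0 \<bullet> v\<bar> < cos s}"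
  have Rs: "?R \<in> sets sphere_measure"
    by (rule sets_sphere_fun) (auto intro!: open_Collect_conj open_Collect_less continuous_intros)
  have preR: "pre ?R = {x \<in> B0. cos t < \<bar>e0 \<bullet> x\<bar> / norm x \<and> \<bar>e0 \<bullet> x\<bar> / norm x < cos s}"
    using pre_fun[of "\<lambda>r. cos t < r \<and> r < cos s", where 'a='a] by simp
  have OR: "Op \<subseteq> pre ?R"
  proof
    fix x assume x: "x \<in> Op"
    then have "x \<noteq> 0" by (auto simp: Op_def)
    then have n: "norm x > 0" by simp
    show "x \<in> pre ?R" unfolding preR using x n
      by (auto simp: Op_def field_simps)
  qed
  obtain r where r: "r > 0" "ball x0 r \<subseteq> Op" using Oo x0O open_contains_ball by blast
  have "0 < emeasure lborel (ball x0 r)" using r(1) by (simp add: emeasure_ball)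
  also have "\<dots> \<le> emeasure lborel (pre ?R)"
    using r(2) OR pre_sets[OF Rs] by (intro emeasure_mono) auto
  finally have pe: "0 < emeasure lborel (pre ?R)" .
  have "pre ?R \<subseteq> ball 0 1" by (auto simp: pre_def)
  then have "emeasure lborel (pre ?R) \<le> emeasure lborel (ball (0::'a) 1)"
    by (intro emeasure_mono) auto
  then have "emeasure lborel (pre ?R) < \<infinity>" using emeasure_lborel_ball_finite[of "0::'a" 1] by simp
  with pe have "0 < measure lborel (pre ?R)"
    by (simp add: measure_def enn2real_positive_iff)
  then have Rpos: "0 < measure sphere_measure ?R"
    using measure_sphere[OF Rs] vol_pos[where 'a='a] by simp
  have capsub: "Cap (e0::'a) s \<subseteq> Cap e0 t" using st by (intro Cap_mono) auto
  have "?R \<subseteq> Cap e0 t - Cap e0 s" by (auto simp: Cap_def)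
  then have "measure sphere_measure ?R \<le> measure sphere_measure (Cap (e0::'a) t - Cap e0 s)"
    by (intro P.finite_measure_mono) (auto intro: Cap_sets)
  also have "\<dots> = measure sphere_measure (Cap (e0::'a) t) - measure sphere_measure (Cap (e0::'a) s)"
    by (rule P.finite_measure_Diff) (auto simp: Cap_sets capsub)
  finally show ?thesis using Rpos by (simp add: cap_delta_e0)
qed

lemma inv_spec:
  assumes dim: "DIM('a::euclidean_space) \<ge> 2" and e: "0 < \<epsilon>" "\<epsilon> < 1"
  shows "0 < cap_delta_inv TYPE('a) \<epsilon> \<and> cap_delta_inv TYPE('a) \<epsilon> \<le> pi/2
       \<and> cap_delta TYPE('a) (cap_delta_inv TYPE('a) \<epsilon>) = \<epsilon>"
proof -
  have "\<exists>x. 0 \<le> x \<and> x \<le> pi/2 \<and> cap_delta TYPE('a) x = \<epsilon>"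
    by (rule IVT') (use e delta0[OF dim] delta_pi2[where 'a='a] delta_cont[OF dim] in auto)
  then obtain x where x: "x \<in> {0..pi/2}" "cap_delta TYPE('a) x = \<epsilon>" by auto
  have uniq: "y = x" if "y \<in> {0..pi/2} \<and> cap_delta TYPE('a) y = \<epsilon>" for y
  proof (rule ccontr)
    assume "y \<noteq> x"
    then have "y < x \<or> x < y" by auto
    then show False
      using delta_strict[OF dim, of y x] delta_strict[OF dim, of x y] that x by auto
  qed
  have th: "cap_delta_inv TYPE('a) \<epsilon> = x"
    unfolding cap_delta_inv_def by (rule the_equality) (use x uniq in auto)
  have "x \<noteq> 0" using x e delta0[OF dim] by auto
  then show ?thesis using th x by auto
qed

lemma tri_pos:
  fixes x y z :: "'a::euclidean_space"
  assumes n: "norm z = 1" "norm y = 1" "norm x = 1"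
    and ab: "0 \<le> a" "a \<le> pi/2" "0 \<le> b" "b \<le> pi/2"
    and p: "z \<bullet> y \<ge> cos a" and q: "y \<bullet> x \<ge> cos b"
  shows "z \<bullet> x \<ge> cos (a + b)"
proof -
  define P where "P = z \<bullet> y"
  define Q where "Q = y \<bullet> x"
  have ca: "0 \<le> cos a" "0 \<le> sin a" using ab by (auto intro!: cos_ge_zero sin_ge_zero)
  have cb: "0 \<le> cos b" "0 \<le> sin b" using ab by (auto intro!: cos_ge_zero sin_ge_zero)
  have P1: "P \<le> 1" using inner_unit_le[OF n(1,2)] by (simp add: P_def)
  have Q1: "Q \<le> 1" using inner_unit_le[OF n(2,3)] by (simp add: Q_def)
  have P0: "cos a \<le> P" "0 \<le> P" using p ca by (auto simp: P_def)
  have Q0: "cos b \<le> Q" "0 \<le> Q" using q cb by (auto simp: Q_def)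
  define u where "u = z - P *\<^sub>R y"
  define w where "w = x - Q *\<^sub>R y"
  have yy: "y \<bullet> y = 1" using n(2) by (simp add: dot_square_norm)
  have zz: "z \<bullet> z = 1" using n(1) by (simp add: dot_square_norm)
  have xx: "x \<bullet> x = 1" using n(3) by (simp add: dot_square_norm)
  have uw: "u \<bullet> w = z \<bullet> x - P * Q"
    by (simp add: u_def w_def inner_diff_left inner_diff_right yy P_def Q_def inner_commute algebra_simps)
  have uu: "norm u ^ 2 = 1 - P^2"
    unfolding power2_norm_eq_inner
    by (simp add: u_def inner_diff_left inner_diff_right yy zz P_def inner_commute algebra_simps power2_eq_square)
  have ww: "norm w ^ 2 = 1 - Q^2"
    unfolding power2_norm_eq_inner
    by (simp add: w_def inner_diff_left inner_diff_right yy xx Q_def inner_commute algebra_simps power2_eq_square)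
  have nu: "norm u = sqrt (1 - P^2)" using uu by (metis norm_ge_zero real_sqrt_unique)
  have nw: "norm w = sqrt (1 - Q^2)" using ww by (metis norm_ge_zero real_sqrt_unique)
  have "- (norm u * norm w) \<le> u \<bullet> w"
    using Cauchy_Schwarz_ineq2[of u w] by linarith
  then have "- (sqrt (1 - P^2) * sqrt (1 - Q^2)) \<le> z \<bullet> x - P * Q"
    using uw nu nw by simp
  then have main: "z \<bullet> x \<ge> P * Q - sqrt (1 - P^2) * sqrt (1 - Q^2)"
    by linarith
  have s1: "sqrt (1 - P^2) \<le> sin a"
  proof -
    have "cos a ^ 2 \<le> P ^ 2" using P0 ca by (intro power_mono) auto
    then have "1 - P^2 \<le> sin a ^ 2" using sin_cos_squared_add[of a] by linarith
    then have "sqrt (1 - P^2) \<le> sqrt (sin a ^ 2)" by (rule real_sqrt_le_mono)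
    then show ?thesis using ca by simp
  qed
  have s2: "sqrt (1 - Q^2) \<le> sin b"
  proof -
    have "cos b ^ 2 \<le> Q ^ 2" using Q0 cb by (intro power_mono) auto
    then have "1 - Q^2 \<le> sin b ^ 2" using sin_cos_squared_add[of b] by linarith
    then have "sqrt (1 - Q^2) \<le> sqrt (sin b ^ 2)" by (rule real_sqrt_le_mono)
    then show ?thesis using cb by simp
  qed
  have "cos a * cos b \<le> P * Q" using P0 Q0 ca cb by (intro mult_mono) auto
  moreover have "sqrt (1 - P^2) * sqrt (1 - Q^2) \<le> sin a * sin b"
  proof -
    have "P^2 \<le> 1" "Q^2 \<le> 1" using P0 P1 Q0 Q1 by (simp_all add: power_le_one)
    then show ?thesis using s1 s2 ca cb by (intro mult_mono) auto
  qed
  ultimately show ?thesis using main by (simp add: cos_add)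
qed

lemma tri:
  fixes x y z :: "'a::euclidean_space"
  assumes n: "norm z = 1" "norm y = 1" "norm x = 1"
    and ab: "0 \<le> a" "a \<le> pi/2" "0 \<le> b" "b \<le> pi/2"
    and p: "\<bar>z \<bullet> y\<bar> \<ge> cos a" and q: "\<bar>y \<bullet> x\<bar> \<ge> cos b"
  shows "\<bar>z \<bullet> x\<bar> \<ge> cos (a + b)"
proof -
  define z' where "z' = (if z \<bullet> y \<ge> 0 then z else - z)"
  define x' where "x' = (if y \<bullet> x \<ge> 0 then x else - x)"
  have n': "norm z' = 1" "norm x' = 1" using n by (auto simp: z'_def x'_def)
  have p': "z' \<bullet> y \<ge> cos a" using p by (auto simp: z'_def)
  have q': "y \<bullet> x' \<ge> cos b" using q by (auto simp: x'_def)
  have "z' \<bullet> x' \<ge> cos (a + b)" by (rule tri_pos[OF n'(1) n(2) n'(2) ab p' q'])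
  moreover have "\<bar>z \<bullet> x\<bar> = \<bar>z' \<bullet> x'\<bar>" by (auto simp: z'_def x'_def)
  ultimately show ?thesis by linarith
qed

definition goodY :: "real \<Rightarrow> 'a::euclidean_space set \<Rightarrow> bool" where
  "goodY c Y \<longleftrightarrow> finite Y \<and> Y \<subseteq> sphere 0 1 \<and> (\<forall>y\<in>Y. \<forall>y'\<in>Y. y \<noteq> y' \<longrightarrow> \<bar>y \<bullet> y'\<bar> < c)"

lemma packing_card:
  fixes Y :: "'a::euclidean_space set"
  assumes th: "0 \<le> \<theta>" "\<theta> \<le> pi/2" and g: "goodY (cos (\<theta>/2)) Y"
  shows "real (card Y) * cap_delta TYPE('a) (\<theta>/4) \<le> 1"
proof -
  interpret P: prob_space "sphere_measure :: 'a measure" by (rule prob_space_sphere_measure)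
  have fin: "finite Y" and Ys: "Y \<subseteq> sphere 0 1" and sep: "\<And>y y'. y \<in> Y \<Longrightarrow> y' \<in> Y \<Longrightarrow> y \<noteq> y' \<Longrightarrow> \<bar>y \<bullet> y'\<bar> < cos (\<theta>/2)"
    using g by (auto simp: goodY_def)
  have disj: "disjoint_family_on (\<lambda>y. Cap y (\<theta>/4)) Y"
    unfolding disjoint_family_on_def
  proof (intro ballI impI)
    fix y y' assume yy: "y \<in> Y" "y' \<in> Y" "y \<noteq> y'"
    show "Cap y (\<theta>/4) \<inter> Cap y' (\<theta>/4) = {}"
    proof (rule ccontr)
      assume "Cap y (\<theta>/4) \<inter> Cap y' (\<theta>/4) \<noteq> {}"
      then obtain v where v: "v \<in> Cap y (\<theta>/4)" "v \<in> Cap y' (\<theta>/4)" by blast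
      have nv: "norm v = 1" and h1: "\<bar>y \<bullet> v\<bar> \<ge> cos (\<theta>/4)" and h2: "\<bar>y' \<bullet> v\<bar> \<ge> cos (\<theta>/4)"
        using v by (auto simp: Cap_def)
      have h2': "\<bar>v \<bullet> y'\<bar> \<ge> cos (\<theta>/4)" using h2 by (simp add: inner_commute)
      have "\<bar>y \<bullet> y'\<bar> \<ge> cos (\<theta>/4 + \<theta>/4)"
        using yy Ys th by (intro tri[OF _ nv _ _ _ _ _ h1 h2']) auto
      moreover have "\<theta>/4 + \<theta>/4 = \<theta>/2" by simp
      ultimately show False using sep[OF yy] by simp
    qed
  qed
  have "measure sphere_measure (\<Union>y\<in>Y. Cap y (\<theta>/4)) = (\<Sum>y\<in>Y. measure sphere_measure (Cap y (\<theta>/4)))"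
    by (rule P.finite_measure_finite_Union[OF fin _ disj]) (auto intro: Cap_sets)
  also have "\<dots> = (\<Sum>y\<in>Y. cap_delta TYPE('a) (\<theta>/4))"
    using Ys by (intro sum.cong refl cap_delta_any) auto
  also have "\<dots> = real (card Y) * cap_delta TYPE('a) (\<theta>/4)" by simp
  finally show ?thesis using P.prob_le_1[of "\<Union>y\<in>Y. Cap y (\<theta>/4)"] by simp
qed

lemma exists_net:
  assumes dim: "DIM('a::euclidean_space) \<ge> 2" and th: "0 < \<theta>" "\<theta> \<le> pi/2"
  shows "\<exists>Y::'a set. goodY (cos (\<theta>/2)) Y \<and> (\<forall>x\<in>sphere 0 1. \<exists>y\<in>Y. \<bar>x \<bullet> y\<bar> \<ge> cos (\<theta>/2))
            \<and> real (card Y) * cap_delta TYPE('a) (\<theta>/4) \<le> 1"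
proof -
  let ?c = "cos (\<theta>/2)"
  let ?d = "cap_delta TYPE('a) (\<theta>/4)"
  have dpos: "0 < ?d" using delta_strict[OF dim, of 0 "\<theta>/4"] delta0[OF dim] th by simp
  define N0 where "N0 = nat (floor (1 / ?d))"
  have cb: "card Y \<le> N0" if "goodY ?c (Y::'a set)" for Y
  proof -
    have "real (card Y) * ?d \<le> 1" using packing_card[OF _ _ that] th by simp
    then have "real (card Y) \<le> 1 / ?d" using dpos by (simp add: field_simps)
    then show ?thesis unfolding N0_def by linarith
  qed
  define Cs where "Cs = card ` {Y::'a set. goodY ?c Y}"
  have "Cs \<subseteq> {..N0}" using cb by (auto simp: Cs_def)
  then have finC: "finite Cs" by (rule finite_subset) simp
  have g0: "goodY ?c ({}::'a set)" by (simp add: goodY_def)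
  then have "0 \<in> Cs" unfolding Cs_def by force
  then have ne: "Cs \<noteq> {}" by blast
  obtain Y :: "'a set" where gY: "goodY ?c Y" and cY: "card Y = Max Cs"
    using Max_in[OF finC ne] unfolding Cs_def by auto
  have cover: "\<forall>x\<in>sphere 0 1. \<exists>y\<in>Y. \<bar>x \<bullet> y\<bar> \<ge> ?c"
  proof (rule ccontr)
    assume "\<not> ?thesis"
    then obtain x :: 'a where x: "x \<in> sphere 0 1" "\<And>y. y \<in> Y \<Longrightarrow> \<bar>x \<bullet> y\<bar> < ?c" by force
    have xx: "\<bar>x \<bullet> x\<bar> = 1" using x(1) by (simp add: dot_square_norm)
    have "?c \<le> 1" by simp
    have xY: "x \<notin> Y"
    proof
      assume "x \<in> Y"
      then have "\<bar>x \<bullet> x\<bar> < ?c" by (rule x(2))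
      then show False using xx \<open>?c \<le> 1\<close> by linarith
    qed
    have g': "goodY ?c (insert x Y)"
      using gY x xY unfolding goodY_def by (auto simp: inner_commute)
    then have "card (insert x Y) \<in> Cs" unfolding Cs_def by blast
    then have "card (insert x Y) \<le> Max Cs" using finC by simp
    moreover have "card (insert x Y) = Suc (card Y)" using gY xY by (simp add: goodY_def)
    ultimately show False using cY by simp
  qed
  show ?thesis using gY cover packing_card[OF _ _ gY] th by auto
qed

lemma dense_sphere:
  obtains D :: "'a::euclidean_space set" where "countable D" "D \<subseteq> sphere 0 1" "D \<noteq> {}"
    "\<And>x \<eta>. x \<in> sphere 0 1 \<Longrightarrow> \<eta> > 0 \<Longrightarrow> \<exists>d\<in>D. norm (d - x) < \<eta>"
proof -
  obtain D0 :: "'a set" where D0: "countable D0" "\<And>X. open X \<Longrightarrow> X \<noteq> {} \<Longrightarrow> \<exists>d\<in>D0. d \<in> X"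
    using countable_dense_setE by blast
  define D where "D = (\<lambda>x. x /\<^sub>R norm x) ` (D0 - {0}) \<union> {e0}"
  have "countable D" using D0(1) by (simp add: D_def)
  moreover have "D \<subseteq> sphere 0 1"
  proof -
    have "x /\<^sub>R norm x \<in> sphere 0 1" if "x \<in> D0 - {0}" for x :: 'a using that by simp
    moreover have "(e0::'a) \<in> sphere 0 1" by simp
    ultimately show ?thesis unfolding D_def by blast
  qed
  moreover have "D \<noteq> {}" by (simp add: D_def)
  moreover have "\<exists>d\<in>D. norm (d - x) < \<eta>" if x: "x \<in> sphere 0 1" and e: "\<eta> > 0" for x \<eta>
  proof -
    define r where "r = min (\<eta>/2) (1/2)"
    have r: "r > 0" "r \<le> \<eta>/2" "r \<le> 1/2" using e by (auto simp: r_def)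
    have "x \<in> ball x r" using r by simp
    then obtain d0 where d0: "d0 \<in> D0" "d0 \<in> ball x r" using D0(2)[of "ball x r"] by blast
    have dx: "norm (d0 - x) < r" using d0(2) by (simp add: dist_norm norm_minus_commute)
    have nx: "norm x = 1" using x by simp
    have nd: "\<bar>norm d0 - 1\<bar> < r" using norm_triangle_ineq3[of d0 x] dx nx by linarith
    then have d0nz: "d0 \<noteq> 0" using r by auto
    then have pd: "norm d0 > 0" by simp
    have "norm (d0 /\<^sub>R norm d0 - d0) = \<bar>1 - norm d0\<bar>"
    proof -
      have "d0 /\<^sub>R norm d0 - d0 = (1 / norm d0 - 1) *\<^sub>R d0" by (simp add: scaleR_diff_left divide_inverse)
      then have "norm (d0 /\<^sub>R norm d0 - d0) = \<bar>1 / norm d0 - 1\<bar> * norm d0" by simp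
      also have "\<dots> = \<bar>1 - norm d0\<bar>" using pd
        by (simp add: abs_mult[symmetric] field_simps)
      finally show ?thesis .
    qed
    then have "norm (d0 /\<^sub>R norm d0 - x) \<le> \<bar>1 - norm d0\<bar> + norm (d0 - x)"
      using norm_triangle_ineq[of "d0 /\<^sub>R norm d0 - d0" "d0 - x"] by simp
    also have "\<dots> < \<eta>" using nd dx r by linarith
    finally show ?thesis using d0 d0nz by (auto simp: D_def)
  qed
  ultimately show ?thesis using that by blast
qed

lemma absmeas_gen: "(\<lambda>v. \<bar>v \<bullet> (d::'a::euclidean_space)\<bar>) \<in> borel_measurable sphere_measure"
proof -
  have c: "continuous_on UNIV (\<lambda>v::'a. \<bar>v \<bullet> d\<bar>)" by (intro continuous_intros)
  have "(\<lambda>v::'a. \<bar>v \<bullet> d\<bar>) \<in> borel_measurable (restrict_space borel (sphere 0 1))"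
    by (intro measurable_restrict_space1 borel_measurable_continuous_onI c)
  then show ?thesis using sphere_measure_sets[where 'a='a] by (simp cong: measurable_cong_sets)
qed

lemma Q_sets:
  "{p \<in> space (sphere_label_measure M :: ('a::euclidean_space \<times> nat) measure). snd p = \<sigma> \<and> c \<le> \<bar>fst p \<bullet> d\<bar>}
     \<in> sets (sphere_label_measure M :: ('a \<times> nat) measure)"
proof -
  let ?SL = "sphere_label_measure M :: ('a \<times> nat) measure"
  have m1: "(\<lambda>p. \<bar>fst p \<bullet> d\<bar>) \<in> borel_measurable ?SL"
    unfolding sphere_label_measure_def
    by (rule measurable_compose[OF measurable_fst absmeas_gen])
  have m2: "snd \<in> ?SL \<rightarrow>\<^sub>M uniform_count_measure {1..M}"
    unfolding sphere_label_measure_def by (rule measurable_snd)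
  have s1: "(\<lambda>p. \<bar>fst p \<bullet> d\<bar>) -` {c..} \<inter> space ?SL \<in> sets ?SL"
    by (rule measurable_sets[OF m1]) simp
  have s2: "snd -` ({\<sigma>} \<inter> {1..M}) \<inter> space ?SL \<in> sets ?SL"
    by (rule measurable_sets[OF m2]) (simp add: sets_uniform_count_measure)
  have "{p \<in> space ?SL. snd p = \<sigma> \<and> c \<le> \<bar>fst p \<bullet> d\<bar>} =
        ((\<lambda>p. \<bar>fst p \<bullet> d\<bar>) -` {c..} \<inter> space ?SL) \<inter> (snd -` ({\<sigma>} \<inter> {1..M}) \<inter> space ?SL)"
    by (auto simp: sphere_label_measure_def space_pair_measure space_uniform_count_measure)
  then show ?thesis using s1 s2 by auto
qed

lemma good_meas:
  fixes c :: real and N M :: nat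
  shows "{\<omega> \<in> space (PiM {..<N} (\<lambda>_. sphere_label_measure M :: ('a::euclidean_space \<times> nat) measure)).
      \<forall>x\<in>sphere 0 1. \<forall>\<sigma>\<in>{1..M}. \<exists>z\<in>sphere 0 1. (z, \<sigma>) \<in> \<omega> ` {..<N} \<and> c \<le> \<bar>z \<bullet> x\<bar>}
    \<in> sets (PiM {..<N} (\<lambda>_. sphere_label_measure M :: ('a \<times> nat) measure))"
proof -
  let ?SL = "sphere_label_measure M :: ('a \<times> nat) measure"
  let ?P = "PiM {..<N} (\<lambda>_. ?SL)"
  obtain D :: "'a set" where D: "countable D" "D \<subseteq> sphere 0 1" "D \<noteq> {}"
    "\<And>x \<eta>. x \<in> sphere 0 1 \<Longrightarrow> \<eta> > 0 \<Longrightarrow> \<exists>d\<in>D. norm (d - x) < \<eta>"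
    using dense_sphere by blast
  define dd where "dd = from_nat_into D"
  have rD: "range dd = D" unfolding dd_def using D by (simp add: range_from_nat_into)
  define Q where "Q = (\<lambda>\<sigma> d. {p \<in> space ?SL. snd p = \<sigma> \<and> c \<le> \<bar>fst p \<bullet> d\<bar>})"
  have spSL: "space ?SL = sphere 0 1 \<times> {1..M}"
    by (simp add: sphere_label_measure_def space_pair_measure space_uniform_count_measure)
  have eq: "(\<forall>x\<in>sphere 0 1. \<forall>\<sigma>\<in>{1..M}. \<exists>z\<in>sphere 0 1. (z, \<sigma>) \<in> \<omega> ` {..<N} \<and> c \<le> \<bar>z \<bullet> x\<bar>)
      \<longleftrightarrow> (\<forall>\<sigma>\<in>{1..M}. \<forall>n. \<exists>i\<in>{..<N}. \<omega> i \<in> Q \<sigma> (dd n))"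
    if \<omega>: "\<omega> \<in> space ?P" for \<omega>
  proof
    have wi: "\<omega> i \<in> sphere 0 1 \<times> {1..M}" if "i < N" for i
      using \<omega> that spSL by (auto simp: space_PiM PiE_def Pi_def)
    assume L: "\<forall>x\<in>sphere 0 1. \<forall>\<sigma>\<in>{1..M}. \<exists>z\<in>sphere 0 1. (z, \<sigma>) \<in> \<omega> ` {..<N} \<and> c \<le> \<bar>z \<bullet> x\<bar>"
    show "\<forall>\<sigma>\<in>{1..M}. \<forall>n. \<exists>i\<in>{..<N}. \<omega> i \<in> Q \<sigma> (dd n)"
    proof (intro ballI allI)
      fix \<sigma> n assume s: "\<sigma> \<in> {1..M}"
      have "dd n \<in> sphere 0 1" using rD D(2) by blast
      then obtain z where z: "z \<in> sphere 0 1" "(z, \<sigma>) \<in> \<omega> ` {..<N}" "c \<le> \<bar>z \<bullet> dd n\<bar>"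
        using L s by blast
      from z(2) obtain i where i: "i \<in> {..<N}" "(z, \<sigma>) = \<omega> i" by (rule imageE)
      have "\<omega> i \<in> Q \<sigma> (dd n)" using z s spSL unfolding Q_def by (simp add: i(2)[symmetric])
      then show "\<exists>i\<in>{..<N}. \<omega> i \<in> Q \<sigma> (dd n)" using i(1) by blast
    qed
  next
    have wi: "\<omega> i \<in> sphere 0 1 \<times> {1..M}" if "i < N" for i
      using \<omega> that spSL by (auto simp: space_PiM PiE_def Pi_def)
    assume R: "\<forall>\<sigma>\<in>{1..M}. \<forall>n. \<exists>i\<in>{..<N}. \<omega> i \<in> Q \<sigma> (dd n)"
    show "\<forall>x\<in>sphere 0 1. \<forall>\<sigma>\<in>{1..M}. \<exists>z\<in>sphere 0 1. (z, \<sigma>) \<in> \<omega> ` {..<N} \<and> c \<le> \<bar>z \<bullet> x\<bar>"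
    proof (intro ballI, rule ccontr)
      fix x \<sigma> assume x: "x \<in> sphere 0 1" and s: "\<sigma> \<in> {1..M}"
        and nz: "\<not> (\<exists>z\<in>sphere 0 1. (z, \<sigma>) \<in> \<omega> ` {..<N} \<and> c \<le> \<bar>z \<bullet> x\<bar>)"
      define I where "I = {i. i < N \<and> snd (\<omega> i) = \<sigma>}"
      have finI: "finite I" by (rule finite_subset[of _ "{..<N}"]) (auto simp: I_def)
      have lt: "\<bar>fst (\<omega> i) \<bullet> x\<bar> < c" if "i \<in> I" for i
      proof -
        have "i < N" "snd (\<omega> i) = \<sigma>" using that by (auto simp: I_def)
        moreover have "fst (\<omega> i) \<in> sphere 0 1" using wi[OF \<open>i < N\<close>] by auto
        moreover have "(fst (\<omega> i), \<sigma>) \<in> \<omega> ` {..<N}"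
          using \<open>i < N\<close> \<open>snd (\<omega> i) = \<sigma>\<close> by (metis imageI lessThan_iff prod.collapse)
        ultimately show ?thesis using nz by force
      qed
      define \<eta> where "\<eta> = Min (insert 1 ((\<lambda>i. c - \<bar>fst (\<omega> i) \<bullet> x\<bar>) ` I))"
      have \<eta>pos: "\<eta> > 0" unfolding \<eta>_def using finI lt by (auto simp: Min_gr_iff)
      have \<eta>le: "\<eta> \<le> c - \<bar>fst (\<omega> i) \<bullet> x\<bar>" if "i \<in> I" for i
        unfolding \<eta>_def using finI that by (intro Min_le) auto
      obtain d where d: "d \<in> D" "norm (d - x) < \<eta>" using D(4)[OF x \<eta>pos] by blast
      obtain n where n: "dd n = d" using rD d(1) by blast
      obtain i where i: "i < N" "\<omega> i \<in> Q \<sigma> d" using R s n by blast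
      have iI: "i \<in> I" using i by (auto simp: Q_def I_def)
      have c1: "c \<le> \<bar>fst (\<omega> i) \<bullet> d\<bar>" using i by (auto simp: Q_def)
      have nz1: "norm (fst (\<omega> i)) = 1" using wi[OF i(1)] by auto
      have "\<bar>fst (\<omega> i) \<bullet> d\<bar> \<le> \<bar>fst (\<omega> i) \<bullet> x\<bar> + \<bar>fst (\<omega> i) \<bullet> (d - x)\<bar>"
        by (simp add: inner_diff_right)
      also have "\<bar>fst (\<omega> i) \<bullet> (d - x)\<bar> \<le> norm (d - x)"
        using Cauchy_Schwarz_ineq2[of "fst (\<omega> i)" "d - x"] nz1 by simp
      finally have "\<bar>fst (\<omega> i) \<bullet> d\<bar> < \<bar>fst (\<omega> i) \<bullet> x\<bar> + \<eta>" using d(2) by linarith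
      then show False using c1 \<eta>le[OF iI] by linarith
    qed
  qed
  have "{\<omega> \<in> space ?P. \<forall>x\<in>sphere 0 1. \<forall>\<sigma>\<in>{1..M}. \<exists>z\<in>sphere 0 1. (z, \<sigma>) \<in> \<omega> ` {..<N} \<and> c \<le> \<bar>z \<bullet> x\<bar>}
      = {\<omega> \<in> space ?P. \<forall>\<sigma>\<in>{1..M}. \<forall>n. \<exists>i\<in>{..<N}. \<omega> i \<in> Q \<sigma> (dd n)}"
    using eq by blast
  also have "\<dots> \<in> sets ?P"
  proof -
    have base: "{\<omega> \<in> space ?P. \<omega> i \<in> Q \<sigma> (dd n)} \<in> sets ?P" if "i \<in> {..<N}" for i \<sigma> n
    proof -
      have mi: "(\<lambda>\<omega>. \<omega> i) \<in> ?P \<rightarrow>\<^sub>M ?SL" using that by (intro measurable_component_singleton) auto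
      have "Q \<sigma> (dd n) \<in> sets ?SL" unfolding Q_def by (rule Q_sets)
      then have "(\<lambda>\<omega>. \<omega> i) -` Q \<sigma> (dd n) \<inter> space ?P \<in> sets ?P" by (rule measurable_sets[OF mi])
      moreover have "(\<lambda>\<omega>. \<omega> i) -` Q \<sigma> (dd n) \<inter> space ?P = {\<omega> \<in> space ?P. \<omega> i \<in> Q \<sigma> (dd n)}" by auto
      ultimately show ?thesis by simp
    qed
    show ?thesis
    proof (rule sets.sets_Collect_countable_All')
      show "countable {1..M}" by simp
      fix \<sigma> assume "\<sigma> \<in> {1..M}"
      show "{\<omega> \<in> space ?P. \<forall>n. \<exists>i\<in>{..<N}. \<omega> i \<in> Q \<sigma> (dd n)} \<in> sets ?P"
      proof (rule sets.sets_Collect_countable_All)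
        fix n
        show "{\<omega> \<in> space ?P. \<exists>i\<in>{..<N}. \<omega> i \<in> Q \<sigma> (dd n)} \<in> sets ?P"
          by (rule sets.sets_Collect_finite_Ex) (use base in auto)
      qed
    qed
  qed
  finally show ?thesis .
qed

lemma rect_meas:
  fixes y :: "'a::euclidean_space" and M :: nat
  assumes y: "norm y = 1" and s: "\<sigma> \<in> {1..M}"
  shows "Cap y t \<times> {\<sigma>} \<in> sets (sphere_label_measure M :: ('a \<times> nat) measure)"
    and "measure (sphere_label_measure M :: ('a \<times> nat) measure) (Cap y t \<times> {\<sigma>}) = cap_delta TYPE('a) t / real M"
proof -
  interpret P: prob_space "sphere_measure :: 'a measure" by (rule prob_space_sphere_measure)
  have M0: "M > 0" using s by auto
  interpret U: prob_space "uniform_count_measure {1..M}"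
    using M0 by (intro prob_space_uniform_count_measure) auto
  have ss: "{\<sigma>} \<in> sets (uniform_count_measure {1..M})" using s by (simp add: sets_uniform_count_measure)
  show "Cap y t \<times> {\<sigma>} \<in> sets (sphere_label_measure M :: ('a \<times> nat) measure)"
    unfolding sphere_label_measure_def using Cap_sets ss by (rule pair_measureI)
  have "emeasure (sphere_label_measure M :: ('a \<times> nat) measure) (Cap y t \<times> {\<sigma>})
      = emeasure sphere_measure (Cap y t) * emeasure (uniform_count_measure {1..M}) {\<sigma>}"
    unfolding sphere_label_measure_def by (rule U.emeasure_pair_measure_Times[OF Cap_sets ss])
  also have "\<dots> = ennreal (measure sphere_measure (Cap y t)) * ennreal (measure (uniform_count_measure {1..M}) {\<sigma>})"
    by (simp only: P.emeasure_eq_measure U.emeasure_eq_measure)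
  also have "measure (uniform_count_measure {1..M}) {\<sigma>} = 1 / real M"
    using s by (simp add: measure_uniform_count_measure)
  also have "measure sphere_measure (Cap y t) = cap_delta TYPE('a) t" by (rule cap_delta_any[OF y])
  finally have "emeasure (sphere_label_measure M :: ('a \<times> nat) measure) (Cap y t \<times> {\<sigma>})
      = ennreal (cap_delta TYPE('a) t / real M)"
    by (simp add: ennreal_mult'' divide_inverse)
  then show "measure (sphere_label_measure M :: ('a \<times> nat) measure) (Cap y t \<times> {\<sigma>}) = cap_delta TYPE('a) t / real M"
    unfolding measure_def using measure_nonneg[of sphere_measure "Cap y t"] cap_delta_any[OF y, of t]
    by simp
qed

theorem lemma2:
  fixes M N :: nat and \<epsilon> :: real
  assumes "DIM('a::euclidean_space) \<ge> 2"
    and "M > 0" and "N > 0"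
    and "0 < \<epsilon>" and "\<epsilon> < 1"
  shows "measure (PiM {..<N} (\<lambda>_. sphere_label_measure M :: ('a \<times> nat) measure))
            {\<omega> \<in> space (PiM {..<N} (\<lambda>_. sphere_label_measure M :: ('a \<times> nat) measure)).
               is_covering TYPE('a) M \<epsilon> (\<omega> ` {..<N})}
         \<ge> 1 - real M * (1 - cap_delta TYPE('a) (cap_delta_inv TYPE('a) \<epsilon> / 2) / real M) ^ N
                 / cap_delta TYPE('a) (cap_delta_inv TYPE('a) \<epsilon> / 4)"
proof -
  note dim = assms(1)
  let ?SL = "sphere_label_measure M :: ('a \<times> nat) measure"
  let ?P = "PiM {..<N} (\<lambda>_. ?SL)"
  define \<theta> where "\<theta> = cap_delta_inv TYPE('a) \<epsilon>"
  have th: "0 < \<theta>" "\<theta> \<le> pi/2" using inv_spec[OF dim assms(4,5)] by (auto simp: \<theta>_def)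
  define d2 where "d2 = cap_delta TYPE('a) (\<theta>/2)"
  define d4 where "d4 = cap_delta TYPE('a) (\<theta>/4)"
  have d4pos: "0 < d4" unfolding d4_def using delta_strict[OF dim, of 0 "\<theta>/4"] delta0[OF dim] th by simp
  interpret S: prob_space "sphere_measure :: 'a measure" by (rule prob_space_sphere_measure)
  have d2le: "0 \<le> d2" "d2 \<le> 1" unfolding d2_def cap_delta_e0 by auto
  interpret SL: prob_space ?SL unfolding sphere_label_measure_def
    using assms(2) by (intro prob_space_pair prob_space_sphere_measure prob_space_uniform_count_measure) auto
  interpret PS: finite_product_prob_space "\<lambda>_. ?SL" "{..<N}"
  proof -
    have "product_prob_space (\<lambda>_. ?SL)" by (rule product_prob_spaceI) (rule SL.prob_space_axioms)
    then show "finite_product_prob_space (\<lambda>_. ?SL) {..<N}"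
      unfolding finite_product_prob_space_def finite_product_sigma_finite_def finite_product_sigma_finite_axioms_def
        product_prob_space_def by auto
  qed
  define G where "G = {\<omega> \<in> space ?P. is_covering TYPE('a) M \<epsilon> (\<omega> ` {..<N})}"
  have Gs: "G \<in> sets ?P" unfolding G_def is_covering_def by (rule good_meas)
  obtain Y :: "'a set" where Y: "goodY (cos (\<theta>/2)) Y" "\<forall>x\<in>sphere 0 1. \<exists>y\<in>Y. \<bar>x \<bullet> y\<bar> \<ge> cos (\<theta>/2)"
      "real (card Y) * d4 \<le> 1"
    using exists_net[OF dim th] unfolding d4_def by blast
  have finY: "finite Y" and Ys: "Y \<subseteq> sphere 0 1" using Y(1) by (auto simp: goodY_def)
  define E where "E = (\<lambda>p::'a \<times> nat. PiE {..<N} (\<lambda>_. space ?SL - Cap (fst p) (\<theta>/2) \<times> {snd p}))"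
  have Es: "E p \<in> sets ?P" if "p \<in> Y \<times> {1..M}" for p
  proof -
    have "Cap (fst p) (\<theta>/2) \<times> {snd p} \<in> sets ?SL" using that Ys by (intro rect_meas(1)) auto
    then show ?thesis unfolding E_def by (intro sets_PiM_I_finite) auto
  qed
  have Em: "measure ?P (E p) = (1 - d2 / real M) ^ N" if "p \<in> Y \<times> {1..M}" for p
  proof -
    have r: "Cap (fst p) (\<theta>/2) \<times> {snd p} \<in> sets ?SL" and
      rm: "measure ?SL (Cap (fst p) (\<theta>/2) \<times> {snd p}) = d2 / real M"
      using that Ys rect_meas[of "fst p" "snd p" M "\<theta>/2"] by (auto simp: d2_def)
    have "measure ?P (E p) = (\<Prod>i\<in>{..<N}. measure ?SL (space ?SL - Cap (fst p) (\<theta>/2) \<times> {snd p}))"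
      unfolding E_def by (rule PS.prob_times) (use r in auto)
    also have "\<dots> = (1 - d2 / real M) ^ N" using SL.prob_compl[OF r] rm by simp
    finally show ?thesis .
  qed
  have sub: "space ?P - G \<subseteq> (\<Union>p\<in>Y \<times> {1..M}. E p)"
  proof
    fix \<omega> assume w: "\<omega> \<in> space ?P - G"
    show "\<omega> \<in> (\<Union>p\<in>Y \<times> {1..M}. E p)"
    proof (rule ccontr)
      assume nE: "\<omega> \<notin> (\<Union>p\<in>Y \<times> {1..M}. E p)"
      have wsp: "\<omega> \<in> space ?P" using w by blast
      have "is_covering TYPE('a) M \<epsilon> (\<omega> ` {..<N})"
        unfolding is_covering_def
      proof (intro ballI)
        fix x :: 'a and \<sigma> assume x: "x \<in> sphere 0 1" and s: "\<sigma> \<in> {1..M}"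
        obtain y where y: "y \<in> Y" "\<bar>x \<bullet> y\<bar> \<ge> cos (\<theta>/2)" using Y(2) x by blast
        have "\<omega> \<notin> E (y, \<sigma>)" using nE y s by blast
        moreover have "\<omega> \<in> PiE {..<N} (\<lambda>_. space ?SL)" using wsp by (simp add: space_PiM)
        ultimately obtain i where i: "i < N" "\<omega> i \<in> Cap y (\<theta>/2) \<times> {\<sigma>}"
          unfolding E_def by (auto simp: PiE_def Pi_def)
        define z where "z = fst (\<omega> i)"
        have wi: "\<omega> i = (z, \<sigma>)" using i(2) by (auto simp: z_def)
        have z: "z \<in> sphere 0 1" "\<bar>y \<bullet> z\<bar> \<ge> cos (\<theta>/2)" using i(2) wi by (auto simp: Cap_def)
        have "\<bar>z \<bullet> x\<bar> \<ge> cos (\<theta>/2 + \<theta>/2)"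
        proof (rule tri)
          show "norm z = 1" "norm y = 1" "norm x = 1" using z x y Ys by auto
          show "\<bar>z \<bullet> y\<bar> \<ge> cos (\<theta>/2)" using z by (simp add: inner_commute)
          show "\<bar>y \<bullet> x\<bar> \<ge> cos (\<theta>/2)" using y by (simp add: inner_commute)
        qed (use th in auto)
        then have "\<bar>z \<bullet> x\<bar> \<ge> cos (cap_delta_inv TYPE('a) \<epsilon>)" by (simp add: \<theta>_def)
        moreover have "(z, \<sigma>) \<in> \<omega> ` {..<N}" using wi i(1) by (metis imageI lessThan_iff)
        ultimately show "\<exists>z\<in>sphere 0 1. (z, \<sigma>) \<in> \<omega> ` {..<N} \<and> cos (cap_delta_inv TYPE('a) \<epsilon>) \<le> \<bar>z \<bullet> x\<bar>"
          using z(1) by blast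
      qed
      then show False using w by (simp add: G_def)
    qed
  qed
  have "measure ?P (space ?P - G) \<le> measure ?P (\<Union>p\<in>Y \<times> {1..M}. E p)"
    by (rule PS.finite_measure_mono[OF sub]) (use Es finY in auto)
  also have "\<dots> \<le> (\<Sum>p\<in>Y \<times> {1..M}. measure ?P (E p))"
    by (rule measure_UNION_le) (use Es finY in auto)
  also have "\<dots> = (\<Sum>p\<in>Y \<times> {1..M}. (1 - d2 / real M) ^ N)" by (rule sum.cong) (auto simp: Em)
  also have "\<dots> = real (card Y) * real M * (1 - d2 / real M) ^ N" using finY by (simp add: card_cartesian_product)
  also have "\<dots> \<le> real M * (1 - d2 / real M) ^ N / d4"
  proof -
    have "real (card Y) \<le> 1 / d4" using Y(3) d4pos by (simp add: field_simps)
    moreover have "0 \<le> real M * (1 - d2 / real M) ^ N"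
      using d2le assms(2) by (intro mult_nonneg_nonneg zero_le_power) (auto simp: field_simps)
    ultimately have "real (card Y) * (real M * (1 - d2 / real M) ^ N) \<le> 1 / d4 * (real M * (1 - d2 / real M) ^ N)"
      by (rule mult_right_mono)
    then show ?thesis by (simp add: field_simps)
  qed
  finally have bad: "measure ?P (space ?P - G) \<le> real M * (1 - d2 / real M) ^ N / d4" .
  have "measure ?P G = 1 - measure ?P (space ?P - G)" using PS.prob_compl[OF Gs] by simp
  then show ?thesis using bad by (simp add: G_def d2_def d4_def \<theta>_def)
qed

end
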